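(* Let $V=\{1,\dots,n\}$, $k\ge1$, $g>0$, $E_k=\{X\subseteq V:|X|\le k\}$, and let $\{o_X\}_{X\in E_k}$ be operators with $\sum_{X\in E_k:X\ni v}\|o_X\|\le g$ for all $v\in V$. Then for every subset $L\subseteq V$ and every $m\ge1$, $$\sum_{w\in\mathcal{G}_m^L}\frac{n_w}{m!}\prod_{s=1}^mN_{X_s|w_L}\|o_{X_s}\|\le\frac12e^{|L|/k}(2e^3gk)^m,$$ where for $w=\{X_1,\dots,X_m\}$ we write $w_L=\{L,X_1,\dots,X_m\}$.
   Context: A cluster is a multiset $w=\{X_1,\dots,X_m\}$ of elements of $E_k$, $|w|=m$; $\oplus$ denotes multiset union and $V_w=X_1\cup\dots\cup X_m$. $\mathcal{G}_m^L$ is the set of clusters $w$ with $|w|=m$ that are $L$-connected: there is no decomposition $w=w_1\oplus w_2$ with $w_2\ne\emptyset$ and $(L\cup V_{w_1})\cap V_{w_2}=\emptyset$. $n_w$ is the number of ordered tuples $(X_1,\dots,X_m)\in E_k^m$ whose underlying multiset is $w$ (i.e. $m!$ divided by the product of factorials of the multiplicities). $N_{X_s|w_L}=\#\{X\in w_L:X\ne X_s,\ X\cap X_s\ne\emptyset\}$. $\|\cdot\|$ is the operator norm. *)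

theory Defs
  imports "HOL-Analysis.Analysis" "HOL-Library.Multiset"
begin

definition Ek :: "nat \<Rightarrow> nat \<Rightarrow> nat set set" where
  "Ek n k = {X. X \<subseteq> {1..n} \<and> card X \<le> k}"

definition Vw :: "'a set multiset \<Rightarrow> 'a set" where
  "Vw w = \<Union> (set_mset w)"

definition L_connected :: "'a set \<Rightarrow> 'a set multiset \<Rightarrow> bool" where
  "L_connected L w \<longleftrightarrow>
     \<not> (\<exists>w1 w2. w = w1 + w2 \<and> w2 \<noteq> {#} \<and> (L \<union> Vw w1) \<inter> Vw w2 = {})"

definition Gcl :: "nat \<Rightarrow> nat \<Rightarrow> nat set \<Rightarrow> nat \<Rightarrow> nat set multiset set" where
  "Gcl n k L m = {w. size w = m \<and> set_mset w \<subseteq> Ek n k \<and> L_connected L w}"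

definition nw :: "'a multiset \<Rightarrow> nat" where
  "nw w = card {xs. length xs = size w \<and> mset xs = w}"

definition Ncount :: "'a set \<Rightarrow> 'a set multiset \<Rightarrow> nat" where
  "Ncount X wL = size (filter_mset (\<lambda>Y. Y \<noteq> X \<and> Y \<inter> X \<noteq> {}) wL)"

end

theory Submission
  imports Defs
begin


definition acyc :: "'a set \<Rightarrow> 'a set \<Rightarrow> ('a \<Rightarrow> 'a) set" where
  "acyc V R = {p \<in> V \<rightarrow>\<^sub>E (V \<union> R). \<forall>v\<in>V. \<exists>n. (p ^^ n) v \<in> R}"

definition trees :: "'a set \<Rightarrow> 'a \<Rightarrow> ('a \<Rightarrow> 'a \<Rightarrow> bool) \<Rightarrow> ('a \<Rightarrow> 'a) set" where
  "trees V r E = {p \<in> acyc V {r}. \<forall>v\<in>V. E v (p v)}"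

definition deg :: "'a set \<Rightarrow> 'a \<Rightarrow> ('a \<Rightarrow> 'a \<Rightarrow> bool) \<Rightarrow> 'a \<Rightarrow> nat" where
  "deg V r E v = card {u \<in> insert r V. E v u}"

definition reach :: "'a set \<Rightarrow> ('a \<Rightarrow> 'a \<Rightarrow> bool) \<Rightarrow> ('a \<times> 'a) set" where
  "reach W E = {(x,y). x \<in> W \<and> y \<in> W \<and> E x y}\<^sup>*"

lemma iter_transfer:
  assumes "\<forall>x\<in>A. q x = p x" "\<forall>x\<in>A. p x \<in> A \<union> R"
  shows "u \<in> A \<union> R \<Longrightarrow> (p ^^ n) u \<in> R \<Longrightarrow> \<exists>n'. (q ^^ n') u \<in> R"
proof (induction n arbitrary: u)
  case 0
  then show ?case by (metis funpow_0)
next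
  case (Suc n)
  show ?case
  proof (cases "u \<in> R")
    case True
    then show ?thesis by (metis funpow_0)
  next
    case False
    then have uA: "u \<in> A" using Suc.prems by auto
    have "(p ^^ n) (p u) \<in> R" using Suc.prems(2) by (simp add: funpow_Suc_right del: funpow.simps)
    moreover have "p u \<in> A \<union> R" using assms(2) uA by auto
    ultimately obtain n' where "(q ^^ n') (p u) \<in> R" using Suc.IH by blast
    then have "(q ^^ Suc n') u \<in> R" using assms(1) uA by (simp add: funpow_Suc_right del: funpow.simps)
    then show ?thesis by blast
  qed
qed

lemma finite_trees: "finite V \<Longrightarrow> finite (trees V r E)"
  unfolding trees_def acyc_def
  by (rule finite_subset[of _ "V \<rightarrow>\<^sub>E (V \<union> {r})"]) (auto intro!: finite_PiE)

lemma trees_extend: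
  assumes fin: "finite V'" and v: "v \<notin> V'" "v \<noteq> r" and irr: "\<forall>x. \<not> E x x"
  shows "card (trees V' r E) * card {u \<in> insert r V'. E v u} \<le> card (trees (insert v V') r E)"
proof -
  let ?N = "{u \<in> insert r V'. E v u}"
  let ?f = "\<lambda>(p, u). p(v := u)"
  have sub: "?f ` (trees V' r E \<times> ?N) \<subseteq> trees (insert v V') r E"
  proof
    fix t assume "t \<in> ?f ` (trees V' r E \<times> ?N)"
    then obtain p u where t: "t = p(v := u)" and p: "p \<in> trees V' r E" and u: "u \<in> ?N" by auto
    have pP: "p \<in> V' \<rightarrow>\<^sub>E (V' \<union> {r})" and pa: "\<forall>x\<in>V'. \<exists>n. (p ^^ n) x \<in> {r}"
      and pE: "\<forall>x\<in>V'. E x (p x)"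
      using p unfolding trees_def acyc_def by auto
    have uv: "u \<noteq> v" using u irr by auto
    have tP: "t \<in> insert v V' \<rightarrow>\<^sub>E (insert v V' \<union> {r})"
      using pP u v unfolding t by (auto simp: PiE_def extensional_def Pi_def)
    have agree: "\<forall>x\<in>V'. t x = p x" using v unfolding t by auto
    have pmap: "\<forall>x\<in>V'. p x \<in> V' \<union> {r}" using pP by auto
    have reachV': "\<exists>n. (t ^^ n) x \<in> {r}" if "x \<in> V' \<union> {r}" for x
    proof (cases "x = r")
      case True then show ?thesis by (metis funpow_0 singletonI)
    next
      case False
      then have "x \<in> V'" using that by auto
      then obtain n where "(p ^^ n) x \<in> {r}" using pa by auto
      then show ?thesis using iter_transfer[OF agree pmap] that by blast
    qed
    have "\<forall>x\<in>insert v V'. \<exists>n. (t ^^ n) x \<in> {r}"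
    proof
      fix x assume x: "x \<in> insert v V'"
      show "\<exists>n. (t ^^ n) x \<in> {r}"
      proof (cases "x = v")
        case True
        have "u \<in> V' \<union> {r}" using u by auto
        then obtain n where "(t ^^ n) u \<in> {r}" using reachV' by blast
        then have "(t ^^ Suc n) v \<in> {r}" unfolding t by (simp add: funpow_Suc_right del: funpow.simps)
        then show ?thesis using True by blast
      next
        case False then show ?thesis using x reachV' by auto
      qed
    qed
    moreover have "\<forall>x\<in>insert v V'. E x (t x)" using pE u v unfolding t by auto
    ultimately show "t \<in> trees (insert v V') r E" using tP unfolding trees_def acyc_def by auto
  qed
  have inj: "inj_on ?f (trees V' r E \<times> ?N)"
  proof (rule inj_onI, clarify)
    fix p u p' u'
    assume p: "p \<in> trees V' r E" and p': "p' \<in> trees V' r E" and eq: "p(v := u) = p'(v := u')"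
    have "p v = undefined" "p' v = undefined" using p p' v unfolding trees_def acyc_def
      by (auto simp: PiE_def extensional_def)
    then show "p = p' \<and> u = u'" using eq by (metis fun_upd_triv fun_upd_upd fun_upd_same)
  qed
  have "card (trees V' r E) * card ?N = card (?f ` (trees V' r E \<times> ?N))"
    unfolding card_image[OF inj] card_cartesian_product ..
  also have "\<dots> \<le> card (trees (insert v V') r E)"
    by (rule card_mono[OF finite_trees sub]) (use fin in auto)
  finally show ?thesis .
qed

lemma reach_mono: "W \<subseteq> W' \<Longrightarrow> reach W E \<subseteq> reach W' E"
  unfolding reach_def by (rule rtrancl_mono) auto

lemma prod_plus_one_le:
  fixes x :: "'b \<Rightarrow> real"
  assumes "finite A" "t \<ge> 0" "\<forall>s\<in>A. x s \<ge> 0 \<and> x s + 1 \<le> t * x s"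
  shows "(\<Prod>s\<in>A. x s + 1) \<le> t ^ card A * (\<Prod>s\<in>A. x s)"
proof -
  have "(\<Prod>s\<in>A. x s + 1) \<le> (\<Prod>s\<in>A. t * x s)"
    by (rule prod_mono) (use assms in auto)
  also have "\<dots> = t ^ card A * (\<Prod>s\<in>A. x s)" by (simp add: prod.distrib)
  finally show ?thesis .
qed

lemma one_plus_pow_le_e: "(1 + 1 / real n) ^ n \<le> exp 1"
proof -
  have "(1 + 1 / real n) ^ n \<le> exp (1 / real n) ^ n"
    by (rule power_mono) (auto simp: add.commute)
  also have "\<dots> = exp (real n * (1 / real n))" by (simp only: exp_of_nat_mult)
  also have "\<dots> \<le> exp 1" by (cases "n = 0") auto
  finally show ?thesis .
qed

lemma trees_empty: "trees {} r E = {\<lambda>x. undefined}"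
  unfolding trees_def acyc_def by auto

lemma reach_step_out:
  assumes "(s, r) \<in> reach W E" "s \<noteq> r"
  shows "\<exists>y\<in>W. E s y"
  using assms unfolding reach_def by (auto elim: converse_rtranclE)

lemma outside_piece_reach:
  assumes sym: "\<forall>x y. E x y \<longrightarrow> E y x"
    and conn: "\<forall>y\<in>W. (y, r) \<in> reach W E" and rW: "r \<in> W" and rK: "r \<notin> K" and cK: "c \<notin> K"
    and closed: "\<forall>x\<in>K. \<forall>y\<in>W. E x y \<and> y \<noteq> c \<longrightarrow> y \<in> K"
  shows "\<forall>y\<in>W - K. (y, r) \<in> reach (W - K) E"
proof -
  let ?R = "{(x,y). x \<in> W \<and> y \<in> W \<and> E x y}"
  let ?R' = "{(x,y). x \<in> W - K \<and> y \<in> W - K \<and> E x y}"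
  have main: "(z \<in> W - K \<longrightarrow> (z, r) \<in> ?R'\<^sup>*) \<and> (z \<in> K \<longrightarrow> (c, r) \<in> ?R'\<^sup>*)"
    if "(z, r) \<in> ?R\<^sup>*" for z
    using that
  proof (induction rule: converse_rtrancl_induct)
    case base
    then show ?case using rK by auto
  next
    case (step z z')
    then have zz: "z \<in> W" "z' \<in> W" "E z z'" by auto
    show ?case
    proof (intro conjI impI)
      assume z: "z \<in> W - K"
      show "(z, r) \<in> ?R'\<^sup>*"
      proof (cases "z' \<in> K")
        case True
        then have "z = c" using closed zz sym z by blast
        then show ?thesis using step.IH True by auto
      next
        case False
        then have "(z, z') \<in> ?R'" using zz z by auto
        then show ?thesis using step.IH False zz by (meson Diff_iff converse_rtrancl_into_rtrancl)
      qed
    next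
      assume z: "z \<in> K"
      show "(c, r) \<in> ?R'\<^sup>*"
      proof (cases "z' \<in> K")
        case True then show ?thesis using step.IH by auto
      next
        case False
        then have "z' = c" using closed zz z by blast
        then show ?thesis using step.IH False zz by auto
      qed
    qed
  qed
  show ?thesis using main conn unfolding reach_def by blast
qed

theorem graph_bound:
  fixes V :: "'a set" and E :: "'a \<Rightarrow> 'a \<Rightarrow> bool"
  assumes "finite V" "r \<notin> V" "\<forall>x y. E x y \<longrightarrow> E y x" "\<forall>x. \<not> E x x"
    "\<forall>v\<in>V. (v, r) \<in> reach (insert r V) E"
  shows "(\<Prod>v\<in>V. real (deg V r E v)) \<le> (2 * exp 1) ^ card V * real (card (trees V r E))"
  using assms
proof (induction "card V" arbitrary: V rule: less_induct)
  case less
  note fin = less.prems(1) and rV = less.prems(2) and sym = less.prems(3) and irr = less.prems(4)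
    and conn = less.prems(5)
  show ?case
  proof (cases "V = {}")
    case True
    then show ?thesis by (simp add: trees_empty)
  next
    case False
    define W where "W = insert r V"
    have connW: "\<forall>y\<in>W. (y, r) \<in> reach W E" using conn unfolding W_def reach_def by auto
    define P where "P = (\<lambda>(c, K). c \<in> W \<and> K \<subseteq> V - {c} \<and> K \<noteq> {} \<and>
        (\<forall>x\<in>K. \<forall>y\<in>W. E x y \<and> y \<noteq> c \<longrightarrow> y \<in> K))"
    have "P (r, V)" unfolding P_def W_def using False rV by auto
    then obtain cK where cK: "P cK" and cKmin: "\<forall>y. P y \<longrightarrow> card (snd cK) \<le> card (snd y)"
      using ex_has_least_nat[of P "(r, V)" "\<lambda>x. card (snd x)"] by blast
    obtain c K where cKeq: "cK = (c, K)" by (cases cK)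
    have cW: "c \<in> W" and KV: "K \<subseteq> V - {c}" and Kne: "K \<noteq> {}"
      and closed: "\<forall>x\<in>K. \<forall>y\<in>W. E x y \<and> y \<noteq> c \<longrightarrow> y \<in> K"
      using cK unfolding cKeq P_def by auto
    have Kmin: "card K \<le> card K'" if "P (c', K')" for c' K'
      using cKmin that unfolding cKeq by fastforce
    have finK: "finite K" using KV fin finite_subset by blast
    have rK: "r \<notin> K" using KV rV by auto
    have out: "\<forall>y\<in>W - K. (y, r) \<in> reach (W - K) E"
      by (rule outside_piece_reach[OF sym connW _ rK _ closed]) (use KV W_def in auto)
    have rem: "\<forall>u\<in>V - {v}. (u, r) \<in> reach (insert r (V - {v})) E" if vK: "v \<in> K" for v
    proof (rule ccontr)
      assume nc: "\<not> ?thesis"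
      define K' where "K' = {u \<in> V - {v}. (u, r) \<notin> reach (insert r (V - {v})) E}"
      have K'ne: "K' \<noteq> {}" using nc unfolding K'_def by auto
      have vW: "v \<in> W" using vK KV W_def by auto
      have K'closed: "\<forall>x\<in>K'. \<forall>y\<in>W. E x y \<and> y \<noteq> v \<longrightarrow> y \<in> K'"
      proof (intro ballI impI)
        fix x y assume x: "x \<in> K'" and y: "y \<in> W" and xy: "E x y \<and> y \<noteq> v"
        have xin: "x \<in> insert r (V - {v})" using x unfolding K'_def by auto
        have yin: "y \<in> insert r (V - {v})" using y xy unfolding W_def by auto
        have step: "(x, y) \<in> {(a, b). a \<in> insert r (V - {v}) \<and> b \<in> insert r (V - {v}) \<and> E a b}"
          using xin yin xy by auto
        show "y \<in> K'"
        proof (rule ccontr)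
          assume "y \<notin> K'"
          then have "(y, r) \<in> reach (insert r (V - {v})) E"
            using yin unfolding K'_def reach_def by auto
          then have "(x, r) \<in> reach (insert r (V - {v})) E"
            using step unfolding reach_def by (meson converse_rtrancl_into_rtrancl)
          then show False using x unfolding K'_def by auto
        qed
      qed
      have K'sub: "K' \<subseteq> V - {v}" unfolding K'_def by auto
      have "P (v, K')" unfolding P_def using vW K'ne K'closed K'sub by (simp only: case_prod_conv) blast
      then have c1: "card K \<le> card K'" by (rule Kmin)
      have "K' \<subseteq> K - {v}"
      proof
        fix u assume u: "u \<in> K'"
        show "u \<in> K - {v}"
        proof (rule ccontr)
          assume "u \<notin> K - {v}"
          then have "u \<in> W - K" using u unfolding K'_def W_def by auto
          then have "(u, r) \<in> reach (W - K) E" using out by auto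
          moreover have "W - K \<subseteq> insert r (V - {v})" using vK unfolding W_def by auto
          ultimately have "(u, r) \<in> reach (insert r (V - {v})) E" using reach_mono by blast
          then show False using u unfolding K'_def by auto
        qed
      qed
      then have "K' \<subset> K" using vK by blast
      then have "card K' < card K" by (rule psubset_card_mono[OF finK])
      then show False using c1 by simp
    qed
    define dg where "dg = deg V r E"
    obtain v where vK: "v \<in> K" and vmin: "\<forall>x\<in>K. dg v \<le> dg x"
      using ex_has_least_nat[of "\<lambda>x. x \<in> K" _ dg] Kne by blast
    have vV: "v \<in> V" and vr: "v \<noteq> r" using vK KV rV by auto
    define V' where "V' = V - {v}"
    have VV': "V = insert v V'" and vV': "v \<notin> V'" using vV unfolding V'_def by auto
    have finV': "finite V'" using fin unfolding V'_def by auto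
    have conn': "\<forall>u\<in>V'. (u, r) \<in> reach (insert r V') E" using rem[OF vK] unfolding V'_def .
    have IH: "(\<Prod>s\<in>V'. real (deg V' r E s)) \<le> (2 * exp 1) ^ card V' * real (card (trees V' r E))"
    proof -
      have "card V' < card V" unfolding V'_def by (rule card_Diff1_less[OF fin vV])
      moreover have "r \<notin> V'" using rV unfolding V'_def by auto
      ultimately show ?thesis using less.hyps[of V'] finV' sym irr conn' by blast
    qed
    define N where "N = {u \<in> W. E v u}"
    define d where "d = card N"
    have dv: "dg v = d" unfolding dg_def deg_def d_def N_def W_def ..
    have finN: "finite N" unfolding N_def W_def using fin by auto
    have degsplit: "real (dg s) = real (deg V' r E s) + (if s \<in> N then 1 else 0)" if s: "s \<in> V'" for s
    proof -
      have eq: "{u \<in> insert r V. E s u} = {u \<in> insert r V'. E s u} \<union> (if E s v then {v} else {})"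
        using VV' by auto
      have "dg s = card {u \<in> insert r V'. E s u} + (if E s v then 1 else 0)"
        unfolding dg_def deg_def eq using vV' finV' vr by (auto simp: card_insert_if)
      moreover have "E s v \<longleftrightarrow> s \<in> N" unfolding N_def W_def using sym s VV' by auto
      ultimately show ?thesis unfolding deg_def by auto
    qed
    define A where "A = V' \<inter> N"
    have finA: "finite A" using finV' unfolding A_def by auto
    have xpos: "real (deg V' r E s) \<ge> 1" if "s \<in> A" for s
    proof -
      have "s \<in> V'" "s \<noteq> r" using that rV unfolding A_def V'_def by auto
      then obtain y where "y \<in> insert r V'" "E s y" using reach_step_out[of s r "insert r V'" E] conn' by auto
      then have "{u \<in> insert r V'. E s u} \<noteq> {}" by auto
      moreover have "finite {u \<in> insert r V'. E s u}" using finV' by auto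
      ultimately show ?thesis unfolding deg_def by (simp add: Suc_leI card_gt_0_iff)
    qed
    have key: "(\<Prod>s\<in>A. real (deg V' r E s) + 1) \<le> 2 * exp 1 * (\<Prod>s\<in>A. real (deg V' r E s))"
    proof (cases "d \<le> 1")
      case True
      have "card A \<le> 1" using card_mono[OF finN, of A] True unfolding A_def d_def by auto
      have "(\<Prod>s\<in>A. real (deg V' r E s) + 1) \<le> 2 ^ card A * (\<Prod>s\<in>A. real (deg V' r E s))"
        by (rule prod_plus_one_le[OF finA]) (use xpos in auto)
      also have "\<dots> \<le> 2 * exp 1 * (\<Prod>s\<in>A. real (deg V' r E s))"
      proof (rule mult_right_mono)
        have "(2::real) ^ card A \<le> 2 ^ 1" by (rule power_increasing) (use \<open>card A \<le> 1\<close> in auto)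
        also have "\<dots> \<le> 2 * exp 1" using exp_ge_add_one_self[of 1] by auto
        finally show "(2::real) ^ card A \<le> 2 * exp 1" .
        show "0 \<le> (\<Prod>s\<in>A. real (deg V' r E s))" by (rule prod_nonneg) auto
      qed
      finally show ?thesis .
    next
      case False
      define t where "t = 1 + 1 / real (d - 1)"
      have t1: "t \<ge> 1" unfolding t_def by auto
      have t2: "t \<le> 2" using False unfolding t_def by auto
      have te: "t ^ (d - 1) \<le> exp 1" unfolding t_def using one_plus_pow_le_e by blast
      have nbr: "s \<in> K \<or> s = c" if "s \<in> N" for s
      proof -
        have "s \<in> W" "E v s" using that unfolding N_def by auto
        then show ?thesis using closed vK by blast
      qed
      have inK: "real (deg V' r E s) + 1 \<le> t * real (deg V' r E s)" if s: "s \<in> A" "s \<in> K" for s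
      proof -
        have "dg v \<le> dg s" using vmin s by auto
        then have "real d \<le> real (deg V' r E s) + 1" using degsplit[of s] s dv unfolding A_def by auto
        then have ge: "real (d - 1) \<le> real (deg V' r E s)" using False by auto
        have "real (deg V' r E s) + 1 = real (deg V' r E s) + real (d - 1) * (1 / real (d - 1))"
          using False by auto
        also have "\<dots> \<le> real (deg V' r E s) + real (deg V' r E s) * (1 / real (d - 1))"
          using ge by (intro add_left_mono mult_right_mono) auto
        also have "\<dots> = t * real (deg V' r E s)" unfolding t_def by (simp add: algebra_simps)
        finally show ?thesis .
      qed
      show ?thesis
      proof (cases "c \<in> A")
        case True
        have AK: "\<forall>s\<in>A - {c}. s \<in> K" using nbr unfolding A_def by auto
        have cardA: "card (A - {c}) \<le> d - 1"
        proof -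
          have "card (A - {c}) = card A - 1" using True finA by auto
          moreover have "card A \<le> d" using card_mono[OF finN, of A] unfolding A_def d_def by auto
          ultimately show ?thesis by auto
        qed
        have "(\<Prod>s\<in>A. real (deg V' r E s) + 1) =
            (real (deg V' r E c) + 1) * (\<Prod>s\<in>A - {c}. real (deg V' r E s) + 1)"
          using True finA by (simp add: prod.remove)
        also have "\<dots> \<le> (2 * real (deg V' r E c)) * (t ^ card (A - {c}) * (\<Prod>s\<in>A - {c}. real (deg V' r E s)))"
        proof (rule mult_mono)
          show "real (deg V' r E c) + 1 \<le> 2 * real (deg V' r E c)" using xpos[OF True] by auto
          show "(\<Prod>s\<in>A - {c}. real (deg V' r E s) + 1) \<le> t ^ card (A - {c}) * (\<Prod>s\<in>A - {c}. real (deg V' r E s))"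
            by (rule prod_plus_one_le) (use finA t1 inK AK in auto)
          show "0 \<le> 2 * real (deg V' r E c)" by auto
          show "0 \<le> (\<Prod>s\<in>A - {c}. real (deg V' r E s) + 1)" by (rule prod_nonneg) auto
        qed
        also have "\<dots> \<le> (2 * real (deg V' r E c)) * (exp 1 * (\<Prod>s\<in>A - {c}. real (deg V' r E s)))"
        proof (intro mult_left_mono mult_right_mono)
          have "t ^ card (A - {c}) \<le> t ^ (d - 1)" by (rule power_increasing[OF cardA t1])
          then show "t ^ card (A - {c}) \<le> exp 1" using te by linarith
        qed (auto intro: prod_nonneg)
        also have "\<dots> = 2 * exp 1 * (real (deg V' r E c) * (\<Prod>s\<in>A - {c}. real (deg V' r E s)))"
          by (simp add: algebra_simps)
        also have "\<dots> = 2 * exp 1 * (\<Prod>s\<in>A. real (deg V' r E s))"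
          using True finA by (simp add: prod.remove)
        finally show ?thesis .
      next
        case False
        have AK: "\<forall>s\<in>A. s \<in> K" using nbr False unfolding A_def by auto
        have cardA: "card A \<le> d" using card_mono[OF finN, of A] unfolding A_def d_def by auto
        have "(\<Prod>s\<in>A. real (deg V' r E s) + 1) \<le> t ^ card A * (\<Prod>s\<in>A. real (deg V' r E s))"
          by (rule prod_plus_one_le) (use finA t1 inK AK in auto)
        also have "\<dots> \<le> 2 * exp 1 * (\<Prod>s\<in>A. real (deg V' r E s))"
        proof (rule mult_right_mono)
          have "t ^ card A \<le> t ^ d" by (rule power_increasing[OF cardA t1])
          also have "\<dots> = t * t ^ (d - 1)" using \<open>\<not> d \<le> 1\<close> by (cases d) auto
          also have "\<dots> \<le> 2 * exp 1" using t2 te t1 by (intro mult_mono) auto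
          finally show "t ^ card A \<le> 2 * exp 1" .
        qed (auto intro: prod_nonneg)
        finally show ?thesis .
      qed
    qed
    have splitV': "(\<Prod>s\<in>V'. real (dg s)) \<le> 2 * exp 1 * (\<Prod>s\<in>V'. real (deg V' r E s))"
    proof -
      have "(\<Prod>s\<in>V'. real (dg s)) = (\<Prod>s\<in>A. real (dg s)) * (\<Prod>s\<in>V' - A. real (dg s))"
        using finV' unfolding A_def by (metis Int_lower1 prod.subset_diff mult.commute)
      also have "(\<Prod>s\<in>A. real (dg s)) = (\<Prod>s\<in>A. real (deg V' r E s) + 1)"
        by (rule prod.cong) (auto simp: degsplit A_def)
      also have "(\<Prod>s\<in>V' - A. real (dg s)) = (\<Prod>s\<in>V' - A. real (deg V' r E s))"
        by (rule prod.cong) (auto simp: degsplit A_def)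
      also have "(\<Prod>s\<in>A. real (deg V' r E s) + 1) * (\<Prod>s\<in>V' - A. real (deg V' r E s))
          \<le> (2 * exp 1 * (\<Prod>s\<in>A. real (deg V' r E s))) * (\<Prod>s\<in>V' - A. real (deg V' r E s))"
        by (rule mult_right_mono[OF key]) (auto intro: prod_nonneg)
      also have "\<dots> = 2 * exp 1 * (\<Prod>s\<in>V'. real (deg V' r E s))"
        using finV' unfolding A_def by (simp add: prod.subset_diff[of "V' \<inter> N" V'] mult.commute mult.left_commute)
      finally show ?thesis .
    qed
    have ext: "card (trees V' r E) * d \<le> card (trees V r E)"
    proof -
      have "N = {u \<in> insert r V'. E v u}" unfolding N_def W_def VV' using irr by auto
      then show ?thesis using trees_extend[of V' v r E, OF finV' vV' vr irr] unfolding d_def VV' by simp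
    qed
    have "(\<Prod>s\<in>V. real (deg V r E s)) = real d * (\<Prod>s\<in>V'. real (dg s))"
      using finV' vV' unfolding VV' dg_def by (simp add: dv[unfolded dg_def VV'])
    also have "\<dots> \<le> real d * (2 * exp 1 * ((2 * exp 1) ^ card V' * real (card (trees V' r E))))"
      using splitV' IH by (intro mult_left_mono) (auto intro: order.trans)
    also have "\<dots> = (2 * exp 1) ^ card V * real (card (trees V' r E) * d)"
      using finV' vV' unfolding VV' by (simp add: algebra_simps)
    also have "\<dots> \<le> (2 * exp 1) ^ card V * real (card (trees V r E))"
      using ext by (intro mult_left_mono) (simp only: of_nat_le_iff, simp)
    finally show ?thesis .
  qed
qed




definition glue :: "'i set \<Rightarrow> ('i \<Rightarrow> 'b) \<Rightarrow> ('i \<Rightarrow> 'b) \<Rightarrow> 'i \<Rightarrow> 'b" where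
  "glue S f h = (\<lambda>i. if i \<in> S then f i else h i)"

lemma acyc_finite: "finite I \<Longrightarrow> finite J \<Longrightarrow> finite (acyc I J)"
  unfolding acyc_def by (rule finite_subset[of _ "I \<rightarrow>\<^sub>E (I \<union> J)"]) (auto intro!: finite_PiE)

lemma layer_ne:
  assumes "p \<in> acyc I J" "I \<inter> J = {}" "I \<noteq> {}"
  shows "{i \<in> I. p i \<in> J} \<noteq> {}"
proof -
  have pm: "\<forall>i\<in>I. p i \<in> I \<union> J" using assms(1) unfolding acyc_def by auto
  have "\<forall>i\<in>I. (p ^^ n) i \<in> J \<longrightarrow> (\<exists>i'\<in>I. p i' \<in> J)" for n
  proof (induction n)
    case 0 then show ?case using assms(2) by auto
  next
    case (Suc n)
    show ?case
    proof (intro ballI impI)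
      fix i assume i: "i \<in> I" and h: "(p ^^ Suc n) i \<in> J"
      show "\<exists>i'\<in>I. p i' \<in> J"
      proof (cases "p i \<in> J")
        case True then show ?thesis using i by blast
      next
        case False
        then have "p i \<in> I" using pm i by auto
        moreover have "(p ^^ n) (p i) \<in> J" using h by (simp add: funpow_Suc_right del: funpow.simps)
        ultimately show ?thesis using Suc.IH by blast
      qed
    qed
  qed
  moreover obtain i where "i \<in> I" using assms(3) by auto
  moreover then obtain n where "(p ^^ n) i \<in> J" using assms(1) unfolding acyc_def by auto
  ultimately show ?thesis by blast
qed

lemma acyc_restrict:
  assumes p: "p \<in> acyc I J" and IJ: "I \<inter> J = {}" and S: "S = {i \<in> I. p i \<in> J}"
  shows "restrict p (I - S) \<in> acyc (I - S) S" "restrict p S \<in> S \<rightarrow>\<^sub>E J"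
proof -
  let ?p = "restrict p (I - S)"
  have pm: "\<forall>i\<in>I. p i \<in> I \<union> J" using p unfolding acyc_def by auto
  have mem: "?p \<in> (I - S) \<rightarrow>\<^sub>E ((I - S) \<union> S)" using pm S by auto
  have "\<forall>i\<in>I. (p ^^ n) i \<in> J \<longrightarrow> (\<exists>k. (?p ^^ k) i \<in> S)" for n
  proof (induction n)
    case 0 then show ?case using IJ by auto
  next
    case (Suc n)
    show ?case
    proof (intro ballI impI)
      fix i assume i: "i \<in> I" and h: "(p ^^ Suc n) i \<in> J"
      show "\<exists>k. (?p ^^ k) i \<in> S"
      proof (cases "i \<in> S")
        case True then show ?thesis by (metis funpow_0)
      next
        case False
        then have pi: "p i \<in> I" using pm i S by auto
        have "(p ^^ n) (p i) \<in> J" using h by (simp add: funpow_Suc_right del: funpow.simps)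
        then obtain k where "(?p ^^ k) (p i) \<in> S" using Suc.IH pi by blast
        moreover have "?p i = p i" using i False by auto
        ultimately have "(?p ^^ Suc k) i \<in> S" by (simp add: funpow_Suc_right del: funpow.simps)
        then show ?thesis by blast
      qed
    qed
  qed
  then have "\<forall>i\<in>I - S. \<exists>k. (?p ^^ k) i \<in> S" using p unfolding acyc_def by blast
  then show "restrict p (I - S) \<in> acyc (I - S) S" using mem unfolding acyc_def by auto
  show "restrict p S \<in> S \<rightarrow>\<^sub>E J" using S by auto
qed

lemma acyc_glue:
  assumes q: "q \<in> S \<rightarrow>\<^sub>E J" and p': "p' \<in> acyc (I - S) S" and SI: "S \<subseteq> I" and IJ: "I \<inter> J = {}"
  shows "glue S q p' \<in> acyc I J" "{i \<in> I. glue S q p' i \<in> J} = S"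
proof -
  let ?g = "glue S q p'"
  have p'm: "p' \<in> (I - S) \<rightarrow>\<^sub>E ((I - S) \<union> S)" using p' unfolding acyc_def by auto
  have mem: "?g \<in> I \<rightarrow>\<^sub>E (I \<union> J)"
    using q p'm SI unfolding glue_def by (auto simp: PiE_def Pi_def extensional_def)
  have gS: "?g i \<in> J" if "i \<in> S" for i using q that unfolding glue_def by auto
  have agree: "\<forall>x\<in>I - S. ?g x = p' x" unfolding glue_def by auto
  have p'map: "\<forall>x\<in>I - S. p' x \<in> (I - S) \<union> S" using p'm by auto
  have "\<exists>n. (?g ^^ n) i \<in> J" if i: "i \<in> I" for i
  proof (cases "i \<in> S")
    case True
    then have "(?g ^^ 1) i \<in> J" using gS by simp
    then show ?thesis by blast
  next
    case False
    then obtain k where "(p' ^^ k) i \<in> S" using p' i unfolding acyc_def by auto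
    then obtain n' where "(?g ^^ n') i \<in> S" using iter_transfer[OF agree p'map] i False by blast
    then have "(?g ^^ Suc n') i \<in> J" using gS by simp
    then show ?thesis by blast
  qed
  then show "?g \<in> acyc I J" using mem unfolding acyc_def by auto
  show "{i \<in> I. ?g i \<in> J} = S"
  proof
    show "{i \<in> I. ?g i \<in> J} \<subseteq> S"
    proof
      fix i assume "i \<in> {i \<in> I. ?g i \<in> J}"
      then have i: "i \<in> I" "?g i \<in> J" by auto
      show "i \<in> S"
      proof (rule ccontr)
        assume "i \<notin> S"
        then have "p' i \<in> (I - S) \<union> S" using PiE_mem[OF p'm] i by auto
        then have "?g i \<in> I" using SI \<open>i \<notin> S\<close> unfolding glue_def by auto
        then show False using i IJ by auto
      qed
    qed
    show "S \<subseteq> {i \<in> I. ?g i \<in> J}" using SI gS by auto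
  qed
qed

lemma sum_acyc_split:
  fixes F :: "('i \<Rightarrow> 'i) \<Rightarrow> real"
  assumes fin: "finite I" "finite J" and IJ: "I \<inter> J = {}" and Ine: "I \<noteq> {}"
  shows "(\<Sum>p\<in>acyc I J. F p) =
    (\<Sum>S\<in>Pow I - {{}}. \<Sum>q\<in>S \<rightarrow>\<^sub>E J. \<Sum>p'\<in>acyc (I - S) S. F (glue S q p'))"
proof -
  let ?lay = "\<lambda>p. {i \<in> I. p i \<in> J}"
  have "(\<Sum>p\<in>acyc I J. F p) = (\<Sum>S\<in>Pow I - {{}}. \<Sum>p\<in>{p \<in> acyc I J. ?lay p = S}. F p)"
    by (rule sum.group[symmetric]) (use acyc_finite[OF fin] fin layer_ne[OF _ IJ Ine] in auto)
  also have "\<dots> = (\<Sum>S\<in>Pow I - {{}}. \<Sum>q\<in>S \<rightarrow>\<^sub>E J. \<Sum>p'\<in>acyc (I - S) S. F (glue S q p'))"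
  proof (rule sum.cong[OF refl])
    fix S assume S: "S \<in> Pow I - {{}}"
    have "(\<Sum>p\<in>{p \<in> acyc I J. ?lay p = S}. F p) = (\<Sum>qp\<in>(S \<rightarrow>\<^sub>E J) \<times> acyc (I - S) S. F (glue S (fst qp) (snd qp)))"
    proof (rule sum.reindex_bij_witness[where i = "\<lambda>qp. glue S (fst qp) (snd qp)" and j = "\<lambda>p. (restrict p S, restrict p (I - S))"])
      fix p assume p: "p \<in> {p \<in> acyc I J. ?lay p = S}"
      then have pE: "p \<in> I \<rightarrow>\<^sub>E (I \<union> J)" unfolding acyc_def by auto
      show "glue S (fst (restrict p S, restrict p (I - S))) (snd (restrict p S, restrict p (I - S))) = p"
        using pE S unfolding glue_def by (auto simp: PiE_def extensional_def fun_eq_iff)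
      show "(restrict p S, restrict p (I - S)) \<in> (S \<rightarrow>\<^sub>E J) \<times> acyc (I - S) S"
        using acyc_restrict[of p I J S] p IJ by auto
      show "F (glue S (fst (restrict p S, restrict p (I - S))) (snd (restrict p S, restrict p (I - S)))) = F p"
        using pE S unfolding glue_def by (auto simp: PiE_def extensional_def fun_eq_iff intro!: arg_cong[where f=F])
    next
      fix qp assume qp: "qp \<in> (S \<rightarrow>\<^sub>E J) \<times> acyc (I - S) S"
      then have q: "fst qp \<in> S \<rightarrow>\<^sub>E J" and p': "snd qp \<in> acyc (I - S) S" by auto
      then have p'E: "snd qp \<in> (I - S) \<rightarrow>\<^sub>E ((I - S) \<union> S)" unfolding acyc_def by auto
      show "(restrict (glue S (fst qp) (snd qp)) S, restrict (glue S (fst qp) (snd qp)) (I - S)) = qp"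
        using q p'E unfolding glue_def
        by (cases qp) (auto simp: PiE_def extensional_def fun_eq_iff)
      show "glue S (fst qp) (snd qp) \<in> {p \<in> acyc I J. ?lay p = S}"
        using acyc_glue[OF q p' _ IJ] S by auto
    qed
    also have "\<dots> = (\<Sum>q\<in>S \<rightarrow>\<^sub>E J. \<Sum>p'\<in>acyc (I - S) S. F (glue S q p'))"
      by (simp only: sum.cartesian_product split_def)
    finally show "(\<Sum>p\<in>{p \<in> acyc I J. ?lay p = S}. F p) = (\<Sum>q\<in>S \<rightarrow>\<^sub>E J. \<Sum>p'\<in>acyc (I - S) S. F (glue S q p'))" .
  qed
  finally show ?thesis .
qed

lemma sum_PiE_split:
  fixes G :: "('i \<Rightarrow> 'b) \<Rightarrow> real"
  assumes SI: "S \<subseteq> I"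
  shows "(\<Sum>X\<in>I \<rightarrow>\<^sub>E B. G X) = (\<Sum>XS\<in>S \<rightarrow>\<^sub>E B. \<Sum>X'\<in>(I - S) \<rightarrow>\<^sub>E B. G (glue S XS X'))"
proof -
  have "(\<Sum>X\<in>I \<rightarrow>\<^sub>E B. G X) = (\<Sum>xx\<in>(S \<rightarrow>\<^sub>E B) \<times> ((I - S) \<rightarrow>\<^sub>E B). G (glue S (fst xx) (snd xx)))"
  proof (rule sum.reindex_bij_witness[where i = "\<lambda>xx. glue S (fst xx) (snd xx)" and j = "\<lambda>X. (restrict X S, restrict X (I - S))"])
    fix X assume X: "X \<in> I \<rightarrow>\<^sub>E B"
    show "glue S (fst (restrict X S, restrict X (I - S))) (snd (restrict X S, restrict X (I - S))) = X"
      using X SI unfolding glue_def by (auto simp: PiE_def extensional_def fun_eq_iff)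
    show "(restrict X S, restrict X (I - S)) \<in> (S \<rightarrow>\<^sub>E B) \<times> ((I - S) \<rightarrow>\<^sub>E B)" using X SI by auto
    show "G (glue S (fst (restrict X S, restrict X (I - S))) (snd (restrict X S, restrict X (I - S)))) = G X"
      using X SI unfolding glue_def by (auto simp: PiE_def extensional_def fun_eq_iff intro!: arg_cong[where f=G])
  next
    fix xx assume xx: "xx \<in> (S \<rightarrow>\<^sub>E B) \<times> ((I - S) \<rightarrow>\<^sub>E B)"
    show "(restrict (glue S (fst xx) (snd xx)) S, restrict (glue S (fst xx) (snd xx)) (I - S)) = xx"
      using xx unfolding glue_def by (cases xx) (auto simp: PiE_def extensional_def fun_eq_iff)
    show "glue S (fst xx) (snd xx) \<in> I \<rightarrow>\<^sub>E B"
      using xx SI unfolding glue_def by (auto simp: PiE_def extensional_def Pi_def)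
  qed
  also have "\<dots> = (\<Sum>XS\<in>S \<rightarrow>\<^sub>E B. \<Sum>X'\<in>(I - S) \<rightarrow>\<^sub>E B. G (glue S XS X'))"
    by (simp only: sum.cartesian_product split_def)
  finally show ?thesis .
qed




lemma exp_partial_sum:
  fixes x :: real
  assumes "x \<ge> 0"
  shows "(\<Sum>j\<le>n. x ^ j / fact j) \<le> exp x"
proof -
  have s: "(\<lambda>j. x ^ j / fact j) sums exp x"
    using exp_converges[of x] by (simp add: divide_inverse mult.commute)
  have "(\<Sum>j\<le>n. x ^ j / fact j) \<le> suminf (\<lambda>j. x ^ j / fact j)"
    by (rule sum_le_suminf) (use s assms in \<open>auto simp: sums_summable\<close>)
  also have "\<dots> = exp x" using s by (simp add: sums_iff)
  finally show ?thesis .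
qed

lemma sum_Pow_card:
  fixes f :: "nat \<Rightarrow> real"
  assumes "finite I"
  shows "(\<Sum>S\<in>Pow I. f (card S)) = (\<Sum>j\<le>card I. real (card I choose j) * f j)"
proof -
  have "(\<Sum>S\<in>Pow I. f (card S)) = (\<Sum>j\<le>card I. \<Sum>S\<in>{S \<in> Pow I. card S = j}. f (card S))"
    by (rule sum.group[symmetric]) (use assms in \<open>auto intro: card_mono\<close>)
  also have "\<dots> = (\<Sum>j\<le>card I. real (card I choose j) * f j)"
  proof (rule sum.cong[OF refl])
    fix j
    have "(\<Sum>S\<in>{S \<in> Pow I. card S = j}. f (card S)) = (\<Sum>S\<in>{S \<in> Pow I. card S = j}. f j)" by auto
    also have "\<dots> = real (card {S \<in> Pow I. card S = j}) * f j" by simp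
    also have "{S \<in> Pow I. card S = j} = {S. S \<subseteq> I \<and> card S = j}" by auto
    finally show "(\<Sum>S\<in>{S \<in> Pow I. card S = j}. f (card S)) = real (card I choose j) * f j"
      using n_subsets[OF assms, of j] by simp
  qed
  finally show ?thesis .
qed

lemma arith_step:
  fixes g kr beta :: real
  assumes "g > 0" "kr > 0" "beta \<ge> 0"
  shows "(\<Sum>j\<le>N. real (N choose j) * ((g * beta) ^ j * (fact (N - j) * (exp 1 * g * kr) ^ (N - j) * exp (real j))))
    \<le> fact N * (exp 1 * g * kr) ^ N * exp (beta / kr)"
proof -
  define M where "M = exp 1 * g * kr"
  have eq: "real (N choose j) * ((g * beta) ^ j * (fact (N - j) * M ^ (N - j) * exp (real j)))
      = fact N * M ^ N * ((beta / kr) ^ j / fact j)" if j: "j \<le> N" for j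
  proof -
    have fj: "(fact j :: real) \<noteq> 0" "(fact (N - j) :: real) \<noteq> 0" by auto
    have c: "real (N choose j) * fact (N - j) = fact N / fact j"
      using fj by (simp add: binomial_fact[OF j])
    have p: "M ^ N = M ^ (N - j) * M ^ j"
      using j by (simp add: power_add[symmetric])
    have e: "exp (real j) = exp 1 ^ j" by (simp add: exp_of_nat_mult[symmetric])
    have q: "exp 1 * g * kr * (beta / kr) = g * beta * exp 1" using assms by simp
    have gb: "(g * beta) ^ j * exp 1 ^ j = M ^ j * (beta / kr) ^ j"
      unfolding M_def power_mult_distrib[symmetric] q ..
    have "real (N choose j) * ((g * beta) ^ j * (fact (N - j) * M ^ (N - j) * exp (real j)))
        = (real (N choose j) * fact (N - j)) * ((g * beta) ^ j * exp 1 ^ j) * M ^ (N - j)"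
      unfolding e by (simp only: mult_ac)
    also have "\<dots> = (fact N / fact j) * (M ^ j * (beta / kr) ^ j) * M ^ (N - j)"
      unfolding c gb ..
    also have "\<dots> = fact N * (M ^ (N - j) * M ^ j) * ((beta / kr) ^ j / fact j)"
      by (simp only: mult_ac times_divide_eq_right times_divide_eq_left)
    finally show ?thesis unfolding p[symmetric] .
  qed
  have "(\<Sum>j\<le>N. real (N choose j) * ((g * beta) ^ j * (fact (N - j) * M ^ (N - j) * exp (real j))))
      = (\<Sum>j\<le>N. fact N * M ^ N * ((beta / kr) ^ j / fact j))"
    by (rule sum.cong[OF refl]) (simp only: eq atMost_iff)
  also have "\<dots> = fact N * M ^ N * (\<Sum>j\<le>N. (beta / kr) ^ j / fact j)"
    by (simp only: sum_distrib_left)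
  also have "\<dots> \<le> fact N * M ^ N * exp (beta / kr)"
    by (rule mult_left_mono[OF exp_partial_sum]) (use assms in \<open>auto simp: M_def\<close>)
  finally show ?thesis unfolding M_def .
qed




definition Th :: "'v set set \<Rightarrow> ('v set \<Rightarrow> real) \<Rightarrow> 'i set \<Rightarrow> 'i set \<Rightarrow> ('i \<Rightarrow> 'v set) \<Rightarrow> real" where
  "Th B a I J Y = (\<Sum>X\<in>I \<rightarrow>\<^sub>E B. \<Sum>p\<in>acyc I J.
      \<Prod>i\<in>I. a (X i) * (if X i \<inter> glue I X Y (p i) \<noteq> {} then 1 else 0))"

lemma A_sum:
  fixes B :: "'v set set" and a :: "'v set \<Rightarrow> real"
  assumes finS: "finite S" and finJ: "finite J" and finB: "finite B" and a0: "\<forall>X. a X \<ge> 0"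
    and hit: "\<forall>Y. Y \<subseteq> U \<longrightarrow> (\<Sum>X\<in>{X\<in>B. X \<inter> Y \<noteq> {}}. a X) \<le> g * real (card Y)"
    and YU: "\<forall>j\<in>J. Y j \<subseteq> U"
  shows "(\<Sum>XS\<in>S \<rightarrow>\<^sub>E B. \<Sum>q\<in>S \<rightarrow>\<^sub>E J. \<Prod>i\<in>S. a (XS i) * (if XS i \<inter> Y (q i) \<noteq> {} then 1 else 0))
    \<le> (g * (\<Sum>j\<in>J. real (card (Y j)))) ^ card S"
proof -
  define H where "H = (\<lambda>X. \<Sum>j\<in>J. a X * (if X \<inter> Y j \<noteq> {} then 1 else 0))"
  have inner: "(\<Sum>q\<in>S \<rightarrow>\<^sub>E J. \<Prod>i\<in>S. a (XS i) * (if XS i \<inter> Y (q i) \<noteq> {} then 1 else 0))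
      = (\<Prod>i\<in>S. H (XS i))" for XS
    unfolding H_def by (rule prod_sum_PiE[symmetric]) (use finS finJ in auto)
  have "(\<Sum>XS\<in>S \<rightarrow>\<^sub>E B. \<Sum>q\<in>S \<rightarrow>\<^sub>E J. \<Prod>i\<in>S. a (XS i) * (if XS i \<inter> Y (q i) \<noteq> {} then 1 else 0))
      = (\<Sum>XS\<in>S \<rightarrow>\<^sub>E B. \<Prod>i\<in>S. H (XS i))" by (simp only: inner)
  also have "\<dots> = (\<Prod>i\<in>S. \<Sum>X\<in>B. H X)"
    by (rule prod_sum_PiE[symmetric]) (use finS finB in auto)
  also have "\<dots> = (\<Sum>X\<in>B. H X) ^ card S" by simp
  also have "\<dots> \<le> (g * (\<Sum>j\<in>J. real (card (Y j)))) ^ card S"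
  proof (rule power_mono)
    have "(\<Sum>X\<in>B. H X) = (\<Sum>j\<in>J. \<Sum>X\<in>B. a X * (if X \<inter> Y j \<noteq> {} then 1 else 0))"
      unfolding H_def by (rule sum.swap)
    also have "\<dots> = (\<Sum>j\<in>J. \<Sum>X\<in>{X\<in>B. X \<inter> Y j \<noteq> {}}. a X)"
      by (rule sum.cong[OF refl]) (simp add: sum.inter_filter[OF finB, symmetric] if_distrib cong: if_cong)
    also have "\<dots> \<le> (\<Sum>j\<in>J. g * real (card (Y j)))"
      by (rule sum_mono) (use hit YU in auto)
    also have "\<dots> = g * (\<Sum>j\<in>J. real (card (Y j)))" by (simp add: sum_distrib_left)
    finally show "(\<Sum>X\<in>B. H X) \<le> g * (\<Sum>j\<in>J. real (card (Y j)))" .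
    show "0 \<le> (\<Sum>X\<in>B. H X)" unfolding H_def using a0 by (auto intro!: sum_nonneg)
  qed
  finally show ?thesis .
qed

lemma T_factor:
  fixes a :: "'v set \<Rightarrow> real"
  assumes finI: "finite I" and SI: "S \<subseteq> I" and IJ: "I \<inter> J = {}"
    and q: "q \<in> S \<rightarrow>\<^sub>E J" and p': "p' \<in> acyc (I - S) S"
  shows "(\<Prod>i\<in>I. a (glue S XS X' i) * (if glue S XS X' i \<inter> glue I (glue S XS X') Y (glue S q p' i) \<noteq> {} then 1 else 0))
    = (\<Prod>i\<in>S. a (XS i) * (if XS i \<inter> Y (q i) \<noteq> {} then 1 else 0)) *
      (\<Prod>i\<in>I - S. a (X' i) * (if X' i \<inter> glue (I - S) X' XS (p' i) \<noteq> {} then 1 else 0))"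
proof -
  let ?F = "\<lambda>i. a (glue S XS X' i) * (if glue S XS X' i \<inter> glue I (glue S XS X') Y (glue S q p' i) \<noteq> {} then 1 else 0)"
  have p'm: "\<forall>i\<in>I - S. p' i \<in> I" using p' SI unfolding acyc_def by (auto simp: PiE_def Pi_def)
  have "(\<Prod>i\<in>I. ?F i) = (\<Prod>i\<in>I - S. ?F i) * (\<Prod>i\<in>S. ?F i)"
    by (rule prod.subset_diff[OF SI finI])
  also have "\<dots> = (\<Prod>i\<in>S. ?F i) * (\<Prod>i\<in>I - S. ?F i)" by (rule mult.commute)
  also have "(\<Prod>i\<in>S. ?F i) = (\<Prod>i\<in>S. a (XS i) * (if XS i \<inter> Y (q i) \<noteq> {} then 1 else 0))"
  proof (rule prod.cong[OF refl])
    fix i assume i: "i \<in> S"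
    have "q i \<in> J" using q i by auto
    then have "q i \<notin> I" using IJ by auto
    then show "?F i = a (XS i) * (if XS i \<inter> Y (q i) \<noteq> {} then 1 else 0)"
      using i unfolding glue_def by simp
  qed
  also have "(\<Prod>i\<in>I - S. ?F i) = (\<Prod>i\<in>I - S. a (X' i) * (if X' i \<inter> glue (I - S) X' XS (p' i) \<noteq> {} then 1 else 0))"
  proof (rule prod.cong[OF refl])
    fix i assume i: "i \<in> I - S"
    have "p' i \<in> I" using p'm i by auto
    then have "glue I (glue S XS X') Y (glue S q p' i) = glue (I - S) X' XS (p' i)"
      using i unfolding glue_def by auto
    then show "?F i = a (X' i) * (if X' i \<inter> glue (I - S) X' XS (p' i) \<noteq> {} then 1 else 0)"
      using i unfolding glue_def by simp
  qed
  finally show ?thesis .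
qed

theorem Th_bound:
  fixes B :: "'v set set" and a :: "'v set \<Rightarrow> real" and U :: "'v set" and g kr :: real
    and I J :: "'i set" and Y :: "'i \<Rightarrow> 'v set"
  assumes finB: "finite B" and a0: "\<forall>X. a X \<ge> 0" and BU: "\<forall>X\<in>B. X \<subseteq> U \<and> real (card X) \<le> kr"
    and hit: "\<forall>Y. Y \<subseteq> U \<longrightarrow> (\<Sum>X\<in>{X\<in>B. X \<inter> Y \<noteq> {}}. a X) \<le> g * real (card Y)"
    and g: "g > 0" and kr: "kr > 0"
  shows "finite I \<Longrightarrow> finite J \<Longrightarrow> I \<inter> J = {} \<Longrightarrow> \<forall>j\<in>J. Y j \<subseteq> U \<Longrightarrow>
    Th B a I J Y \<le> fact (card I) * (exp 1 * g * kr) ^ card I * exp ((\<Sum>j\<in>J. real (card (Y j))) / kr)"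
proof (induction "card I" arbitrary: I J Y rule: less_induct)
  case less
  note finI = less.prems(1) and finJ = less.prems(2) and IJ = less.prems(3) and YU = less.prems(4)
  define beta where "beta = (\<Sum>j\<in>J. real (card (Y j)))"
  have beta0: "beta \<ge> 0" unfolding beta_def by (auto intro: sum_nonneg)
  show ?case
  proof (cases "I = {}")
    case True
    have "Th B a I J Y = 1" unfolding Th_def acyc_def True by simp
    moreover have "exp (beta / kr) \<ge> 1" using beta0 kr by auto
    ultimately show ?thesis using True unfolding beta_def by simp
  next
    case False
    define N where "N = card I"
    define T where "T = (\<lambda>X p. \<Prod>i\<in>I. a (X i) * (if X i \<inter> glue I X Y (p i) \<noteq> {} then 1 else 0))"
    define A where "A = (\<lambda>(S::'i set) (XS::'i \<Rightarrow> 'v set) (q::'i \<Rightarrow> 'i). \<Prod>i\<in>S. a (XS i) * (if XS i \<inter> Y (q i) \<noteq> {} then 1 else 0))"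
    define c where "c = (\<lambda>j. fact (N - j) * (exp 1 * g * kr) ^ (N - j) * exp (real j))"
    have step1: "Th B a I J Y = (\<Sum>X\<in>I \<rightarrow>\<^sub>E B. \<Sum>S\<in>Pow I - {{}}. \<Sum>q\<in>S \<rightarrow>\<^sub>E J. \<Sum>p'\<in>acyc (I - S) S. T X (glue S q p'))"
      unfolding Th_def T_def by (rule sum.cong[OF refl], rule sum_acyc_split[OF finI finJ IJ False])
    also have "\<dots> = (\<Sum>S\<in>Pow I - {{}}. \<Sum>X\<in>I \<rightarrow>\<^sub>E B. \<Sum>q\<in>S \<rightarrow>\<^sub>E J. \<Sum>p'\<in>acyc (I - S) S. T X (glue S q p'))"
      by (rule sum.swap)
    also have "\<dots> = (\<Sum>S\<in>Pow I - {{}}. \<Sum>XS\<in>S \<rightarrow>\<^sub>E B. (\<Sum>q\<in>S \<rightarrow>\<^sub>E J. A S XS q) * Th B a (I - S) S XS)"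
    proof (rule sum.cong[OF refl])
      fix S assume S: "S \<in> Pow I - {{}}"
      then have SI: "S \<subseteq> I" by auto
      have "(\<Sum>X\<in>I \<rightarrow>\<^sub>E B. \<Sum>q\<in>S \<rightarrow>\<^sub>E J. \<Sum>p'\<in>acyc (I - S) S. T X (glue S q p'))
          = (\<Sum>XS\<in>S \<rightarrow>\<^sub>E B. \<Sum>X'\<in>(I - S) \<rightarrow>\<^sub>E B. \<Sum>q\<in>S \<rightarrow>\<^sub>E J. \<Sum>p'\<in>acyc (I - S) S. T (glue S XS X') (glue S q p'))"
        by (rule sum_PiE_split[OF SI])
      also have "\<dots> = (\<Sum>XS\<in>S \<rightarrow>\<^sub>E B. (\<Sum>q\<in>S \<rightarrow>\<^sub>E J. A S XS q) * Th B a (I - S) S XS)"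
      proof (rule sum.cong[OF refl])
        fix XS
        have "(\<Sum>X'\<in>(I - S) \<rightarrow>\<^sub>E B. \<Sum>q\<in>S \<rightarrow>\<^sub>E J. \<Sum>p'\<in>acyc (I - S) S. T (glue S XS X') (glue S q p'))
            = (\<Sum>X'\<in>(I - S) \<rightarrow>\<^sub>E B. \<Sum>q\<in>S \<rightarrow>\<^sub>E J. \<Sum>p'\<in>acyc (I - S) S. A S XS q *
                (\<Prod>i\<in>I - S. a (X' i) * (if X' i \<inter> glue (I - S) X' XS (p' i) \<noteq> {} then 1 else 0)))"
          unfolding T_def A_def
          by (intro sum.cong refl T_factor[OF finI SI IJ]) auto
        also have "\<dots> = (\<Sum>q\<in>S \<rightarrow>\<^sub>E J. \<Sum>X'\<in>(I - S) \<rightarrow>\<^sub>E B. \<Sum>p'\<in>acyc (I - S) S. A S XS q *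
                (\<Prod>i\<in>I - S. a (X' i) * (if X' i \<inter> glue (I - S) X' XS (p' i) \<noteq> {} then 1 else 0)))"
          by (rule sum.swap)
        also have "\<dots> = (\<Sum>q\<in>S \<rightarrow>\<^sub>E J. A S XS q * Th B a (I - S) S XS)"
          unfolding Th_def by (simp only: sum_distrib_left)
        also have "\<dots> = (\<Sum>q\<in>S \<rightarrow>\<^sub>E J. A S XS q) * Th B a (I - S) S XS"
          by (simp only: sum_distrib_right)
        finally show "(\<Sum>X'\<in>(I - S) \<rightarrow>\<^sub>E B. \<Sum>q\<in>S \<rightarrow>\<^sub>E J. \<Sum>p'\<in>acyc (I - S) S. T (glue S XS X') (glue S q p'))
            = (\<Sum>q\<in>S \<rightarrow>\<^sub>E J. A S XS q) * Th B a (I - S) S XS" .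
      qed
      finally show "(\<Sum>X\<in>I \<rightarrow>\<^sub>E B. \<Sum>q\<in>S \<rightarrow>\<^sub>E J. \<Sum>p'\<in>acyc (I - S) S. T X (glue S q p'))
          = (\<Sum>XS\<in>S \<rightarrow>\<^sub>E B. (\<Sum>q\<in>S \<rightarrow>\<^sub>E J. A S XS q) * Th B a (I - S) S XS)" .
    qed
    also have "\<dots> \<le> (\<Sum>S\<in>Pow I - {{}}. (g * beta) ^ card S * c (card S))"
    proof (rule sum_mono)
      fix S assume S: "S \<in> Pow I - {{}}"
      then have SI: "S \<subseteq> I" and Sne: "S \<noteq> {}" by auto
      have finS: "finite S" using SI finI finite_subset by blast
      have Th_le: "Th B a (I - S) S XS \<le> c (card S)" if XS: "XS \<in> S \<rightarrow>\<^sub>E B" for XS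
      proof -
        have "I - S \<subset> I" using SI Sne by blast
        then have lt: "card (I - S) < card I" by (rule psubset_card_mono[OF finI])
        have XSU: "\<forall>j\<in>S. XS j \<subseteq> U" using XS BU by auto
        have IH: "Th B a (I - S) S XS \<le> fact (card (I - S)) * (exp 1 * g * kr) ^ card (I - S) *
            exp ((\<Sum>j\<in>S. real (card (XS j))) / kr)"
          using less.hyps[OF lt] finI finS XSU by auto
        have "(\<Sum>j\<in>S. real (card (XS j))) \<le> (\<Sum>j\<in>S. kr)"
          by (rule sum_mono) (use XS BU in auto)
        then have "(\<Sum>j\<in>S. real (card (XS j))) / kr \<le> real (card S)"
          using kr by (simp add: divide_le_eq)
        then have "exp ((\<Sum>j\<in>S. real (card (XS j))) / kr) \<le> exp (real (card S))" by simp
        moreover have "card (I - S) = N - card S" unfolding N_def using SI finI by (simp add: card_Diff_subset finS)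
        ultimately have ex: "exp ((\<Sum>j\<in>S. real (card (XS j))) / kr) \<le> exp (real (card S))"
          and cd: "card (I - S) = N - card S" by auto
        have M0: "0 \<le> fact (N - card S) * (exp 1 * g * kr) ^ (N - card S)" using g kr by auto
        have "Th B a (I - S) S XS \<le> fact (N - card S) * (exp 1 * g * kr) ^ (N - card S) *
            exp ((\<Sum>j\<in>S. real (card (XS j))) / kr)" using IH unfolding cd .
        also have "\<dots> \<le> fact (N - card S) * (exp 1 * g * kr) ^ (N - card S) * exp (real (card S))"
          by (rule mult_left_mono[OF ex M0])
        finally show ?thesis unfolding c_def .
      qed
      have "(\<Sum>XS\<in>S \<rightarrow>\<^sub>E B. (\<Sum>q\<in>S \<rightarrow>\<^sub>E J. A S XS q) * Th B a (I - S) S XS)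
          \<le> (\<Sum>XS\<in>S \<rightarrow>\<^sub>E B. (\<Sum>q\<in>S \<rightarrow>\<^sub>E J. A S XS q) * c (card S))"
      proof (rule sum_mono)
        fix XS assume XS: "XS \<in> S \<rightarrow>\<^sub>E B"
        have "0 \<le> (\<Sum>q\<in>S \<rightarrow>\<^sub>E J. A S XS q)" unfolding A_def using a0 by (auto intro!: sum_nonneg prod_nonneg)
        then show "(\<Sum>q\<in>S \<rightarrow>\<^sub>E J. A S XS q) * Th B a (I - S) S XS \<le> (\<Sum>q\<in>S \<rightarrow>\<^sub>E J. A S XS q) * c (card S)"
          by (rule mult_left_mono[OF Th_le[OF XS]])
      qed
      also have "\<dots> = (\<Sum>XS\<in>S \<rightarrow>\<^sub>E B. \<Sum>q\<in>S \<rightarrow>\<^sub>E J. A S XS q) * c (card S)"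
        by (simp only: sum_distrib_right)
      also have "\<dots> \<le> (g * beta) ^ card S * c (card S)"
      proof (rule mult_right_mono)
        show "(\<Sum>XS\<in>S \<rightarrow>\<^sub>E B. \<Sum>q\<in>S \<rightarrow>\<^sub>E J. A S XS q) \<le> (g * beta) ^ card S"
          unfolding A_def beta_def by (rule A_sum[OF finS finJ finB a0 hit YU])
        show "0 \<le> c (card S)" unfolding c_def using g kr by auto
      qed
      finally show "(\<Sum>XS\<in>S \<rightarrow>\<^sub>E B. (\<Sum>q\<in>S \<rightarrow>\<^sub>E J. A S XS q) * Th B a (I - S) S XS)
          \<le> (g * beta) ^ card S * c (card S)" .
    qed
    also have "\<dots> \<le> (\<Sum>S\<in>Pow I. (g * beta) ^ card S * c (card S))"
      by (rule sum_mono2) (use finI g beta0 kr in \<open>auto simp: c_def\<close>)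
    also have "\<dots> = (\<Sum>j\<le>N. real (N choose j) * ((g * beta) ^ j * c j))"
      unfolding N_def by (rule sum_Pow_card[OF finI])
    also have "\<dots> \<le> fact N * (exp 1 * g * kr) ^ N * exp (beta / kr)"
      unfolding c_def by (rule arith_step[OF g kr beta0])
    finally show ?thesis unfolding N_def beta_def .
  qed
qed




lemma half_bound:
  fixes c Z :: real
  assumes "2 \<le> c" "0 \<le> Z"
  shows "Z \<le> c / 2 * Z"
proof -
  have "1 * Z \<le> (c / 2) * Z" by (rule mult_right_mono) (use assms in auto)
  then show ?thesis by simp
qed

lemma prod_indicator:
  assumes "finite A"
  shows "(\<Prod>i\<in>A. (if Q i then 1 else 0) :: real) = (if \<forall>i\<in>A. Q i then 1 else 0)"
  using assms by (induction A rule: finite_induct) auto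

lemma acyc_noself:
  assumes "p \<in> acyc V R" "v \<in> V" "V \<inter> R = {}"
  shows "p v \<noteq> v"
proof
  assume pv: "p v = v"
  have "(p ^^ n) v = v" for n by (induction n) (use pv in auto)
  moreover obtain n where "(p ^^ n) v \<in> R" using assms unfolding acyc_def by auto
  ultimately show False using assms by auto
qed

context
  fixes m :: nat and L :: "nat set" and X :: "nat \<Rightarrow> nat set"
begin

definition MX :: "nat \<Rightarrow> nat set" where "MX = glue {0..<m} X (\<lambda>_. L)"
definition EG :: "nat \<Rightarrow> nat \<Rightarrow> bool" where "EG j j' \<longleftrightarrow> j \<noteq> j' \<and> MX j \<inter> MX j' \<noteq> {}"
definition wX :: "nat set multiset" where "wX = image_mset X (mset_set {0..<m})"

lemma MX_simps: "j < m \<Longrightarrow> MX j = X j" "MX m = L"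
  unfolding MX_def glue_def by auto

lemma ncount_le:
  assumes i: "i < m"
  shows "Ncount (X i) (add_mset L wX) \<le> deg {0..<m} m EG i"
proof -
  define P where "P = (\<lambda>Y. Y \<noteq> X i \<and> Y \<inter> X i \<noteq> {})"
  have sz: "size (filter_mset P wX) = card {j \<in> {0..<m}. P (X j)}"
    unfolding wX_def filter_mset_image_mset by (simp add: filter_mset_mset_set)
  have nc: "Ncount (X i) (add_mset L wX) = (if P L then 1 else 0) + card {j \<in> {0..<m}. P (X j)}"
    unfolding Ncount_def P_def[symmetric] using sz by auto
  define D where "D = {u \<in> insert m {0..<m}. EG i u}"
  have sub: "{j \<in> {0..<m}. P (X j)} \<subseteq> D"
    unfolding D_def EG_def P_def using i by (auto simp: MX_simps)
  have finD: "finite D" unfolding D_def by auto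
  show ?thesis
  proof (cases "P L")
    case True
    have "m \<in> D" using True i unfolding D_def EG_def P_def by (auto simp: MX_simps)
    moreover have "m \<notin> {j \<in> {0..<m}. P (X j)}" by auto
    ultimately have "insert m {j \<in> {0..<m}. P (X j)} \<subseteq> D" using sub by auto
    then have "card (insert m {j \<in> {0..<m}. P (X j)}) \<le> card D" by (rule card_mono[OF finD])
    then show ?thesis unfolding nc deg_def D_def[symmetric] using True by simp
  next
    case False
    show ?thesis unfolding nc deg_def D_def[symmetric] using False card_mono[OF finD sub] by simp
  qed
qed

lemma conn_of_Lconn:
  assumes Lc: "L_connected L wX"
  shows "\<forall>v\<in>{0..<m}. (v, m) \<in> reach (insert m {0..<m}) EG"
proof (rule ccontr)
  assume nc: "\<not> ?thesis"
  define Ur where "Ur = {v \<in> {0..<m}. (v, m) \<notin> reach (insert m {0..<m}) EG}"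
  have Urne: "Ur \<noteq> {}" using nc unfolding Ur_def by auto
  define w1 where "w1 = image_mset X (filter_mset (\<lambda>j. j \<notin> Ur) (mset_set {0..<m}))"
  define w2 where "w2 = image_mset X (filter_mset (\<lambda>j. j \<in> Ur) (mset_set {0..<m}))"
  have split: "wX = w1 + w2"
    unfolding wX_def w1_def w2_def
    by (metis image_mset_union multiset_partition add.commute)
  have sw1: "set_mset w1 = X ` {j \<in> {0..<m}. j \<notin> Ur}" unfolding w1_def by auto
  have sw2: "set_mset w2 = X ` Ur" unfolding w2_def Ur_def by auto
  have w2ne: "w2 \<noteq> {#}" using Urne sw2 by auto
  have disj: "(L \<union> Vw w1) \<inter> Vw w2 = {}"
  proof (rule ccontr)
    assume "(L \<union> Vw w1) \<inter> Vw w2 \<noteq> {}"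
    then obtain x u where u: "u \<in> Ur" and xu: "x \<in> X u" and x: "x \<in> L \<union> Vw w1"
      unfolding Vw_def sw2 by auto
    have um: "u < m" using u unfolding Ur_def by auto
    let ?R = "{(a, b). a \<in> insert m {0..<m} \<and> b \<in> insert m {0..<m} \<and> EG a b}"
    have "(u, m) \<in> reach (insert m {0..<m}) EG"
    proof (cases "x \<in> L")
      case True
      then have "EG u m" unfolding EG_def using xu um by (auto simp: MX_simps)
      then have "(u, m) \<in> ?R" using um by auto
      then show ?thesis unfolding reach_def by auto
    next
      case False
      then obtain j where j: "j \<in> {0..<m}" "j \<notin> Ur" and xj: "x \<in> X j"
        using x unfolding Vw_def sw1 by auto
      have jr: "(j, m) \<in> reach (insert m {0..<m}) EG" using j unfolding Ur_def by auto
      have "u \<noteq> j" using u j by auto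
      then have "EG u j" unfolding EG_def using xu xj um j by (auto simp: MX_simps)
      then have "(u, j) \<in> ?R" using um j by auto
      then show ?thesis using jr unfolding reach_def by (meson converse_rtrancl_into_rtrancl)
    qed
    then show False using u unfolding Ur_def by auto
  qed
  show False using Lc split w2ne disj unfolding L_connected_def by blast
qed

end


lemma hit_lemma:
  fixes a :: "nat set \<Rightarrow> real"
  assumes a0: "\<forall>X. a X \<ge> 0" and hyp: "\<forall>v\<in>{1..n}. (\<Sum>X\<in>{X\<in>Ek n k. v \<in> X}. a X) \<le> g"
    and Y: "Y \<subseteq> {1..n}"
  shows "(\<Sum>X\<in>{X\<in>Ek n k. X \<inter> Y \<noteq> {}}. a X) \<le> g * real (card Y)"
proof -
  have finE: "finite (Ek n k)" unfolding Ek_def by (rule finite_subset[of _ "Pow {1..n}"]) auto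
  have finY: "finite Y" using Y finite_subset by blast
  have "(\<Sum>X\<in>{X\<in>Ek n k. X \<inter> Y \<noteq> {}}. a X) \<le> (\<Sum>X\<in>{X\<in>Ek n k. X \<inter> Y \<noteq> {}}. \<Sum>v\<in>Y. a X * (if v \<in> X then 1 else 0))"
  proof (rule sum_mono)
    fix X assume X: "X \<in> {X\<in>Ek n k. X \<inter> Y \<noteq> {}}"
    then obtain v where v: "v \<in> Y" "v \<in> X" by auto
    have "a X = a X * (if v \<in> X then 1 else 0)" using v by simp
    also have "\<dots> \<le> (\<Sum>v\<in>Y. a X * (if v \<in> X then 1 else 0))"
      by (rule member_le_sum) (use v finY a0 in auto)
    finally show "a X \<le> (\<Sum>v\<in>Y. a X * (if v \<in> X then 1 else 0))" .
  qed
  also have "\<dots> = (\<Sum>v\<in>Y. \<Sum>X\<in>{X\<in>Ek n k. X \<inter> Y \<noteq> {}}. a X * (if v \<in> X then 1 else 0))"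
    by (rule sum.swap)
  also have "\<dots> \<le> (\<Sum>v\<in>Y. g)"
  proof (rule sum_mono)
    fix v assume v: "v \<in> Y"
    have "(\<Sum>X\<in>{X\<in>Ek n k. X \<inter> Y \<noteq> {}}. a X * (if v \<in> X then 1 else 0))
        \<le> (\<Sum>X\<in>Ek n k. a X * (if v \<in> X then 1 else 0))"
      by (rule sum_mono2[OF finE]) (use a0 in auto)
    also have "\<dots> = (\<Sum>X\<in>{X\<in>Ek n k. v \<in> X}. a X)"
      by (simp add: sum.inter_filter[OF finE, symmetric] if_distrib cong: if_cong)
    also have "\<dots> \<le> g" using hyp v Y by auto
    finally show "(\<Sum>X\<in>{X\<in>Ek n k. X \<inter> Y \<noteq> {}}. a X * (if v \<in> X then 1 else 0)) \<le> g" .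
  qed
  also have "\<dots> = g * real (card Y)" by simp
  finally show ?thesis .
qed

theorem proposition4:
  fixes n k :: nat and g :: real
    and ops :: "nat set \<Rightarrow> ('b::real_normed_vector \<Rightarrow>\<^sub>L 'b)"
    and L :: "nat set" and m :: nat
  assumes "k \<ge> 1" and "g > 0"
    and "\<forall>v\<in>{1..n}. (\<Sum>X\<in>{X\<in>Ek n k. v \<in> X}. norm (ops X)) \<le> g"
    and "L \<subseteq> {1..n}" and "m \<ge> 1"
  shows "(\<Sum>w\<in>Gcl n k L m. real (nw w) / fact m *
            (\<Prod>X\<in>#w. real (Ncount X (add_mset L w)) * norm (ops X)))
         \<le> 1/2 * exp (real (card L) / real k) * (2 * exp 3 * g * real k) ^ m"
proof -
  note k1 = assms(1) and g0 = assms(2) and hyp = assms(3) and LU = assms(4) and m1 = assms(5)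
  define B where "B = Ek n k"
  define a where "a = (\<lambda>X. norm (ops X))"
  define V where "V = {0..<m}"
  define F where "F = (\<lambda>w. \<Prod>X\<in>#w. real (Ncount X (add_mset L w)) * norm (ops X))"
  define Lists where "Lists = {xs. length xs = m \<and> set xs \<subseteq> B \<and> L_connected L (mset xs)}"
  define AllL where "AllL = {xs. set xs \<subseteq> B \<and> length xs = m}"
  have a0: "\<forall>X. a X \<ge> 0" unfolding a_def by auto
  have finB: "finite B" unfolding B_def Ek_def by (rule finite_subset[of _ "Pow {1..n}"]) auto
  have finAll: "finite AllL" unfolding AllL_def by (rule finite_lists_length_eq[OF finB])
  have finLists: "finite Lists"
    by (rule finite_subset[OF _ finAll]) (auto simp: Lists_def AllL_def)
  have BU: "\<forall>X\<in>B. X \<subseteq> {1..n} \<and> real (card X) \<le> real k" unfolding B_def Ek_def by auto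
  have hit: "\<forall>Y. Y \<subseteq> {1..n} \<longrightarrow> (\<Sum>X\<in>{X\<in>B. X \<inter> Y \<noteq> {}}. a X) \<le> g * real (card Y)"
    unfolding B_def using hit_lemma[OF a0] hyp unfolding a_def by blast
  have S1: "(\<Sum>w\<in>Gcl n k L m. real (nw w) / fact m * F w) = (\<Sum>xs\<in>Lists. F (mset xs)) / fact m"
  proof -
    have img: "mset ` Lists = Gcl n k L m"
    proof
      show "mset ` Lists \<subseteq> Gcl n k L m" unfolding Lists_def Gcl_def B_def by auto
      show "Gcl n k L m \<subseteq> mset ` Lists"
      proof
        fix w assume w: "w \<in> Gcl n k L m"
        obtain xs where xs: "mset xs = w" using ex_mset by blast
        then have "xs \<in> Lists" using w unfolding Lists_def Gcl_def B_def by auto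
        then show "w \<in> mset ` Lists" using xs by blast
      qed
    qed
    have "(\<Sum>xs\<in>Lists. F (mset xs)) = (\<Sum>w\<in>mset ` Lists. \<Sum>xs\<in>{xs\<in>Lists. mset xs = w}. F (mset xs))"
      by (rule sum.image_gen[OF finLists])
    also have "\<dots> = (\<Sum>w\<in>Gcl n k L m. real (nw w) * F w)"
      unfolding img
    proof (rule sum.cong[OF refl])
      fix w assume w: "w \<in> Gcl n k L m"
      have eq: "{xs\<in>Lists. mset xs = w} = {xs. length xs = size w \<and> mset xs = w}"
        using w unfolding Lists_def Gcl_def B_def by (auto simp flip: size_mset)
      have "(\<Sum>xs\<in>{xs\<in>Lists. mset xs = w}. F (mset xs)) = (\<Sum>xs\<in>{xs\<in>Lists. mset xs = w}. F w)" by auto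
      also have "\<dots> = real (nw w) * F w" unfolding eq nw_def by simp
      finally show "(\<Sum>xs\<in>{xs\<in>Lists. mset xs = w}. F (mset xs)) = real (nw w) * F w" .
    qed
    finally show ?thesis by (simp add: sum_divide_distrib)
  qed
  define G where "G = (\<lambda>X. if L_connected L (wX m X) then F (wX m X) else 0)"
  have S2: "(\<Sum>xs\<in>Lists. F (mset xs)) = (\<Sum>X\<in>V \<rightarrow>\<^sub>E B. G X)"
  proof -
    have "(\<Sum>xs\<in>Lists. F (mset xs)) = (\<Sum>xs\<in>AllL. if L_connected L (mset xs) then F (mset xs) else 0)"
      unfolding Lists_def AllL_def by (subst sum.inter_filter[OF finAll[unfolded AllL_def], symmetric]) (auto intro: sum.cong)
    also have "\<dots> = (\<Sum>X\<in>V \<rightarrow>\<^sub>E B. G X)"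
    proof (rule sum.reindex_bij_witness[where i = "\<lambda>X. map X [0..<m]" and j = "\<lambda>xs. restrict (nth xs) V"])
      fix xs assume xs: "xs \<in> AllL"
      then have len: "length xs = m" unfolding AllL_def by auto
      have mx: "map (restrict (nth xs) V) [0..<m] = xs" unfolding V_def using len by (auto intro: nth_equalityI)
      then show "map (restrict (nth xs) V) [0..<m] = xs" .
      show "restrict (nth xs) V \<in> V \<rightarrow>\<^sub>E B" using xs unfolding AllL_def V_def by auto
      have "wX m (restrict (nth xs) V) = mset (map (restrict (nth xs) V) [0..<m])"
        unfolding wX_def V_def by (simp only: mset_map mset_upt)
      then have "wX m (restrict (nth xs) V) = mset xs" unfolding mx .
      then show "G (restrict (nth xs) V) = (if L_connected L (mset xs) then F (mset xs) else 0)"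
        unfolding G_def by simp
    next
      fix X assume X: "X \<in> V \<rightarrow>\<^sub>E B"
      show "restrict (nth (map X [0..<m])) V = X"
        using X unfolding V_def by (auto simp: PiE_def extensional_def fun_eq_iff)
      show "map X [0..<m] \<in> AllL" using X unfolding AllL_def V_def by auto
    qed
    finally show ?thesis .
  qed
  define TT where "TT = (\<lambda>X. (\<Prod>i\<in>V. a (X i)) * real (card (trees V m (EG m L X))))"
  have S3: "G X \<le> (2 * exp 1) ^ m * TT X" if X: "X \<in> V \<rightarrow>\<^sub>E B" for X
  proof (cases "L_connected L (wX m X)")
    case False
    then show ?thesis unfolding G_def TT_def using a0 by (auto intro!: mult_nonneg_nonneg prod_nonneg)
  next
    case True
    have finV: "finite V" unfolding V_def by auto
    have Fe: "F (wX m X) = (\<Prod>i\<in>V. real (Ncount (X i) (add_mset L (wX m X))) * a (X i))"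
      unfolding F_def wX_def V_def a_def by (simp add: prod_unfold_prod_mset image_mset.compositionality o_def)
    also have "\<dots> \<le> (\<Prod>i\<in>V. real (deg V m (EG m L X) i) * a (X i))"
      by (rule prod_mono) (use ncount_le a0 in \<open>auto simp: V_def intro!: mult_right_mono\<close>)
    also have "\<dots> = (\<Prod>i\<in>V. real (deg V m (EG m L X) i)) * (\<Prod>i\<in>V. a (X i))" by (rule prod.distrib)
    also have "\<dots> \<le> ((2 * exp 1) ^ card V * real (card (trees V m (EG m L X)))) * (\<Prod>i\<in>V. a (X i))"
    proof (rule mult_right_mono)
      show "(\<Prod>i\<in>V. real (deg V m (EG m L X) i)) \<le> (2 * exp 1) ^ card V * real (card (trees V m (EG m L X)))"
      proof (rule graph_bound)
        show "finite V" by (rule finV)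
        show "m \<notin> V" unfolding V_def by auto
        show "\<forall>x y. EG m L X x y \<longrightarrow> EG m L X y x" unfolding EG_def by auto
        show "\<forall>x. \<not> EG m L X x x" unfolding EG_def by auto
        show "\<forall>v\<in>V. (v, m) \<in> reach (insert m V) (EG m L X)" unfolding V_def by (rule conn_of_Lconn[OF True])
      qed
      show "0 \<le> (\<Prod>i\<in>V. a (X i))" using a0 by (auto intro: prod_nonneg)
    qed
    also have "\<dots> = (2 * exp 1) ^ m * TT X" unfolding TT_def V_def by simp
    finally show ?thesis unfolding G_def using True by simp
  qed
  have S4: "(\<Sum>X\<in>V \<rightarrow>\<^sub>E B. TT X) = Th B a V {m} (\<lambda>_. L)"
    unfolding Th_def
  proof (rule sum.cong[OF refl])
    fix X assume X: "X \<in> V \<rightarrow>\<^sub>E B"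
    have finV: "finite V" unfolding V_def by auto
    have tr: "trees V m (EG m L X) = {p \<in> acyc V {m}. \<forall>i\<in>V. X i \<inter> glue V X (\<lambda>_. L) (p i) \<noteq> {}}"
    proof -
      have "EG m L X i (p i) \<longleftrightarrow> X i \<inter> glue V X (\<lambda>_. L) (p i) \<noteq> {}" if "p \<in> acyc V {m}" "i \<in> V" for p i
      proof -
        have "p i \<noteq> i" by (rule acyc_noself[OF that]) (auto simp: V_def)
        then show ?thesis using that unfolding EG_def MX_def V_def glue_def by auto
      qed
      then show ?thesis unfolding trees_def by auto
    qed
    have "(\<Sum>p\<in>acyc V {m}. \<Prod>i\<in>V. a (X i) * (if X i \<inter> glue V X (\<lambda>_. L) (p i) \<noteq> {} then 1 else 0))
        = (\<Sum>p\<in>acyc V {m}. (\<Prod>i\<in>V. a (X i)) * (if \<forall>i\<in>V. X i \<inter> glue V X (\<lambda>_. L) (p i) \<noteq> {} then 1 else 0))"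
      by (rule sum.cong[OF refl]) (simp add: prod.distrib prod_indicator[OF finV])
    also have "\<dots> = (\<Prod>i\<in>V. a (X i)) * real (card {p \<in> acyc V {m}. \<forall>i\<in>V. X i \<inter> glue V X (\<lambda>_. L) (p i) \<noteq> {}})"
      using acyc_finite[OF finV, of "{m}"] by (simp add: sum_distrib_left[symmetric] sum.inter_filter[symmetric])
    finally show "TT X = (\<Sum>p\<in>acyc V {m}. \<Prod>i\<in>V. a (X i) * (if X i \<inter> glue V X (\<lambda>_. L) (p i) \<noteq> {} then 1 else 0))"
      unfolding TT_def tr by simp
  qed
  have S5: "Th B a V {m} (\<lambda>_. L) \<le> fact m * (exp 1 * g * real k) ^ m * exp (real (card L) / real k)"
  proof -
    have "Th B a V {m} (\<lambda>_. L) \<le> fact (card V) * (exp 1 * g * real k) ^ card V *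
        exp ((\<Sum>j\<in>{m}. real (card L)) / real k)"
      by (rule Th_bound[OF finB a0 BU hit g0]) (use k1 LU in \<open>auto simp: V_def\<close>)
    then show ?thesis unfolding V_def by simp
  qed
  have "(\<Sum>w\<in>Gcl n k L m. real (nw w) / fact m * F w) = (\<Sum>X\<in>V \<rightarrow>\<^sub>E B. G X) / fact m"
    unfolding S1 S2 ..
  also have "\<dots> \<le> (\<Sum>X\<in>V \<rightarrow>\<^sub>E B. (2 * exp 1) ^ m * TT X) / fact m"
    by (intro divide_right_mono sum_mono S3) auto
  also have "\<dots> = (2 * exp 1) ^ m * Th B a V {m} (\<lambda>_. L) / fact m"
    by (simp add: sum_distrib_left[symmetric] S4)
  also have "\<dots> \<le> (2 * exp 1) ^ m * (fact m * (exp 1 * g * real k) ^ m * exp (real (card L) / real k)) / fact m"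
    by (intro divide_right_mono mult_left_mono S5) auto
  also have "\<dots> = exp (real (card L) / real k) * (2 * exp 1 * exp 1 * g * real k) ^ m"
  proof -
    have pw: "(2 * exp 1) ^ m * (exp 1 * g * real k) ^ m = (2 * exp 1 * exp 1 * g * real k) ^ m"
    proof -
      have "(2 * exp 1) ^ m * (exp 1 * g * real k) ^ m = (2 * exp 1 * (exp 1 * g * real k)) ^ m"
        by (rule power_mult_distrib[symmetric])
      also have "2 * exp 1 * (exp 1 * g * real k) = 2 * exp 1 * exp 1 * g * real k" by (simp only: mult.assoc)
      finally show ?thesis .
    qed
    have fm: "(fact m :: real) \<noteq> 0" by simp
    have "(2 * exp 1) ^ m * (fact m * (exp 1 * g * real k) ^ m * exp (real (card L) / real k)) / fact m
        = ((2 * exp 1) ^ m * (exp 1 * g * real k) ^ m) * exp (real (card L) / real k) * (fact m / fact m)"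
      by (simp only: mult_ac times_divide_eq_right times_divide_eq_left)
    also have "\<dots> = ((2 * exp 1) ^ m * (exp 1 * g * real k) ^ m) * exp (real (card L) / real k)"
      using fm by simp
    finally show ?thesis unfolding pw by (simp only: mult_ac)
  qed
  also have "\<dots> \<le> 1/2 * exp (real (card L) / real k) * (2 * exp 3 * g * real k) ^ m"
  proof -
    have e3: "exp (3::real) = exp 1 * exp 1 * exp 1" by (simp add: exp_add[symmetric])
    have "(2 * exp 3 * g * real k) ^ m = exp 1 ^ m * (2 * exp 1 * exp 1 * g * real k) ^ m"
      unfolding e3 by (simp add: power_mult_distrib[symmetric] mult_ac)
    moreover have "exp 1 ^ m \<ge> (2::real)"
    proof -
      have "(2::real) \<le> exp 1" using exp_ge_add_one_self[of 1] by simp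
      also have "\<dots> = exp 1 ^ 1" by simp
      also have "\<dots> \<le> exp 1 ^ m" by (rule power_increasing[OF m1]) (use exp_ge_add_one_self[of 1] in simp)
      finally show ?thesis .
    qed
    moreover have "0 \<le> exp (real (card L) / real k) * (2 * exp 1 * exp 1 * g * real k) ^ m"
      using g0 by auto
    ultimately have "exp (real (card L) / real k) * (2 * exp 1 * exp 1 * g * real k) ^ m
        \<le> (exp 1 ^ m / 2) * (exp (real (card L) / real k) * (2 * exp 1 * exp 1 * g * real k) ^ m)"
      by (intro half_bound)
    also have "\<dots> = 1/2 * exp (real (card L) / real k) * (2 * exp 3 * g * real k) ^ m"
      using \<open>(2 * exp 3 * g * real k) ^ m = exp 1 ^ m * (2 * exp 1 * exp 1 * g * real k) ^ m\<close>
      by (simp only: mult_ac times_divide_eq_left times_divide_eq_right)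
    finally show ?thesis .
  qed
  finally show ?thesis unfolding F_def .
qed


end
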